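(* Let $\mathcal{K}$ be a tame knot class in $\mathbb{R}^3$, $\gamma\in\mathcal{C}(\mathcal{K})\cap C^{1,1}(\mathbb{S}_1,\mathbb{R}^3)$, and $p_n\in\mathcal{P}_n$ with $p_n\to\gamma$ in $W^{1,\infty}(\mathbb{S}_1,\mathbb{R}^3)$. Let $s_n\ne t_n$ be parameters with $s_n\to s$, $t_n\to t$, $s\ne t$, such that $(p_n(s_n),p_n(t_n))\in\mathrm{dcrit}(p_n)$ for all $n$. Then $(\gamma(s),\gamma(t))\in\mathrm{dcrit}(\gamma)$.
   Context: $\mathbb{S}_1=\mathbb{R}/\mathbb{Z}$. $\mathcal{C}$ is the set of $\gamma\in W^{1,\infty}(\mathbb{S}_1,\mathbb{R}^3)$ with $|\gamma'|=1$ a.e.; $C^{1,1}$ means $\gamma'$ Lipschitz. $\mathcal{P}_n\subset\mathcal{C}$ is the set of arc length parametrisations of closed equilateral polygons with $n$ edges. For $p\in\mathcal{P}_n$, $\mathrm{dcrit}(p)$ is the set of pairs of distinct points $x=p(t)$, $y=p(s)$ with $s$ a local extremum of $u\mapsto|p(t)-p(u)|^2$ and $t$ a local extremum of $v\mapsto|p(v)-p(s)|^2$. For $\gamma\in\mathcal{C}\cap C^{1}$, $\mathrm{dcrit}(\gamma)$ is the set of pairs $(\gamma(t),\gamma(s))$ of distinct points with $\langle\gamma'(t),\gamma(t)-\gamma(s)\rangle=\langle\gamma'(s),\gamma(t)-\gamma(s)\rangle=0$. A tame knot class $\mathcal{K}$ is an ambient isotopy class of tame knots in $\mathbb{R}^3$;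 $\mathcal{C}(\mathcal{K})$ is the set of injective $\gamma\in\mathcal{C}$ whose image is a knot in $\mathcal{K}$. *)

theory Defs
  imports "HOL-Analysis.Analysis"
begin

type_synonym curve = "real \<Rightarrow> real^3"

text \<open>Maps on S_1 = R/Z are represented as 1-periodic maps on the reals.\<close>
definition periodic1 :: "curve \<Rightarrow> bool" where
  "periodic1 g \<longleftrightarrow> (\<forall>x. g (x + 1) = g x)"

text \<open>The class C: W^{1,inf} (= Lipschitz) periodic curves with |g'| = 1 a.e.\<close>
definition arclength_curves :: "curve set" where
  "arclength_curves = {g. periodic1 g \<and> (\<exists>L. \<forall>x y. dist (g x) (g y) \<le> L * dist x y) \<and>
      (AE t in lborel. g differentiable (at t) \<and> norm (vector_derivative g (at t)) = 1)}"

definition C11 :: "curve \<Rightarrow> bool" where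
  "C11 g \<longleftrightarrow> (\<exists>g'. (\<forall>t. (g has_vector_derivative g' t) (at t)) \<and>
      (\<exists>L. \<forall>x y. norm (g' x - g' y) \<le> L * \<bar>x - y\<bar>))"

text \<open>P_n: arc length parametrisations of closed equilateral polygons with n edges
  (vertices at parameters a + k/n, affine in between).\<close>
definition polygons :: "nat \<Rightarrow> curve set" where
  "polygons n = {p. p \<in> arclength_curves \<and> n > 0 \<and>
      (\<exists>a. \<forall>k::int. \<forall>l\<in>{0..1::real}.
         p (a + (of_int k + l) / real n) = (1 - l) *\<^sub>R p (a + of_int k / real n)
                                            + l *\<^sub>R p (a + (of_int k + 1) / real n))}"

definition local_extremum :: "(real \<Rightarrow> real) \<Rightarrow> real \<Rightarrow> bool" where
  "local_extremum f x \<longleftrightarrow> (\<exists>e>0. (\<forall>y\<in>ball x e. f y \<le> f x) \<or> (\<forall>y\<in>ball x e. f x \<le> f y))"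

definition dcrit_poly :: "curve \<Rightarrow> ((real^3) \<times> (real^3)) set" where
  "dcrit_poly p = {(p t, p s) | t s. p t \<noteq> p s \<and>
      local_extremum (\<lambda>u. (norm (p t - p u))\<^sup>2) s \<and>
      local_extremum (\<lambda>v. (norm (p v - p s))\<^sup>2) t}"

definition dcrit_C1 :: "curve \<Rightarrow> ((real^3) \<times> (real^3)) set" where
  "dcrit_C1 g = {(g t, g s) | t s. g t \<noteq> g s \<and>
      inner (vector_derivative g (at t)) (g t - g s) = 0 \<and>
      inner (vector_derivative g (at s)) (g t - g s) = 0}"

definition knot :: "(real^3) set \<Rightarrow> bool" where
  "knot S \<longleftrightarrow> (\<exists>c. continuous_on UNIV c \<and> periodic1 c \<and> inj_on c {0..<1} \<and> S = c ` {0..1})"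

definition polygonal_knot :: "(real^3) set \<Rightarrow> bool" where
  "polygonal_knot S \<longleftrightarrow> knot S \<and> (\<exists>vs. vs \<noteq> [] \<and>
      S = (\<Union>i<length vs. closed_segment (vs ! i) (vs ! ((i + 1) mod length vs))))"

definition ambient_isotopic :: "(real^3) set \<Rightarrow> (real^3) set \<Rightarrow> bool" where
  "ambient_isotopic A B \<longleftrightarrow> (\<exists>H :: real \<times> (real^3) \<Rightarrow> real^3.
      continuous_on ({0..1} \<times> UNIV) H \<and>
      (\<forall>t\<in>{0..1}. \<exists>g. homeomorphism UNIV UNIV (\<lambda>x. H (t, x)) g) \<and>
      (\<forall>x. H (0, x) = x) \<and> (\<lambda>x. H (1, x)) ` A = B)"

definition tame_knot :: "(real^3) set \<Rightarrow> bool" where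
  "tame_knot S \<longleftrightarrow> knot S \<and> (\<exists>P. polygonal_knot P \<and> ambient_isotopic S P)"

definition tame_knot_class :: "(real^3) set set \<Rightarrow> bool" where
  "tame_knot_class K \<longleftrightarrow> (\<exists>k. tame_knot k \<and> K = {k'. tame_knot k' \<and> ambient_isotopic k k'})"

definition curves_in_class :: "(real^3) set set \<Rightarrow> curve set" where
  "curves_in_class K = {g. g \<in> arclength_curves \<and> inj_on g {0..<1} \<and> g ` {0..1} \<in> K}"

definition W1inf_tendsto :: "(nat \<Rightarrow> curve) \<Rightarrow> curve \<Rightarrow> bool" where
  "W1inf_tendsto p g \<longleftrightarrow> (\<forall>e>0. \<forall>\<^sub>F n in sequentially.
      (\<forall>t. norm (p n t - g t) \<le> e) \<and>
      (AE t in lborel. norm (vector_derivative (p n) (at t) - vector_derivative g (at t)) \<le> e))"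

definition S1_tendsto :: "(nat \<Rightarrow> real) \<Rightarrow> real \<Rightarrow> bool" where
  "S1_tendsto x y \<longleftrightarrow> (\<exists>k :: nat \<Rightarrow> int. (\<lambda>n. x n - of_int (k n)) \<longlonglongrightarrow> y)"

definition S1_eq :: "real \<Rightarrow> real \<Rightarrow> bool" where
  "S1_eq x y \<longleftrightarrow> x - y \<in> \<int>"

end

theory Submission
  imports Defs
begin


lemma div_mul_cancel4:
  fixes r K :: real
  assumes "4 * K > 0"
  shows "r / (4 * K) * K = r / 4"
  using assms by (simp add: field_simps)

lemma tri3:
  fixes a b c :: "'a::real_normed_vector"
  shows "norm (a - c) \<le> norm (a - b) + norm (b - c)"
  using norm_triangle_ineq[of "a - b" "b - c"] by simp

lemma periodic_nat:
  fixes g :: "real \<Rightarrow> 'a"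
  assumes "\<forall>x. g (x + 1) = g x"
  shows "g (x + real n) = g x"
proof (induction n arbitrary: x)
  case 0 then show ?case by simp
next
  case (Suc n)
  have "x + real (Suc n) = (x + real n) + 1" by simp
  then show ?case using assms Suc by metis
qed

lemma periodic_int:
  fixes g :: "real \<Rightarrow> 'a"
  assumes "\<forall>x. g (x + 1) = g x"
  shows "g (x + of_int k) = g x"
proof (cases "k \<ge> 0")
  case True
  then obtain n where "k = int n" by (metis nonneg_eq_int)
  then have e: "x + of_int k = x + real n" by simp
  show ?thesis unfolding e by (rule periodic_nat[OF assms])
next
  case False
  then have "- k \<ge> 0" by simp
  then obtain n where "- k = int n" using nonneg_int_cases by blast
  then have k: "k = - int n" by simp
  have e: "x + of_int k = x - real n" using k by simp
  have "g (x - real n + real n) = g (x - real n)" by (rule periodic_nat[OF assms])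
  then show ?thesis unfolding e by simp
qed

lemma frac_shift:
  fixes g :: "real \<Rightarrow> 'a"
  assumes "\<forall>x. g (x + 1) = g x"
  shows "g (frac x) = g x"
  using periodic_int[OF assms, of x "- \<lfloor>x\<rfloor>"] by (simp add: frac_def)

lemma inj_mod:
  fixes g :: "real \<Rightarrow> 'a"
  assumes per: "\<forall>x. g (x + 1) = g x" and inj: "inj_on g {0..<1}" and eq: "g x = g y"
  shows "x - y \<in> \<int>"
proof -
  have "g (frac x) = g (frac y)" using eq frac_shift[OF per] by simp
  moreover have "frac x \<in> {0..<1}" "frac y \<in> {0..<1}" by (auto simp: frac_lt_1)
  ultimately have "frac x = frac y" using inj by (auto dest: inj_onD)
  then have "x - y = of_int (\<lfloor>x\<rfloor> - \<lfloor>y\<rfloor>)" by (simp add: frac_def)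
  then show ?thesis by simp
qed

lemma AE_ex:
  fixes a b :: real
  assumes "AE y in lborel. P y" and "a < b"
  shows "\<exists>y. a < y \<and> y < b \<and> P y"
proof (rule ccontr)
  assume H: "\<not> ?thesis"
  from assms(1) obtain N where N: "{x \<in> space lborel. \<not> P x} \<subseteq> N" "emeasure lborel N = 0" "N \<in> sets lborel"
    by (rule AE_E)
  have "{a<..<b} \<subseteq> N" using N(1) H by auto
  then have "emeasure lborel {a<..<b} \<le> emeasure lborel N" by (rule emeasure_mono[OF _ N(3)])
  moreover have "emeasure lborel {a<..<b} = ennreal (b - a)" using assms(2) by simp
  ultimately have "ennreal (b - a) = 0" using N(2) by (metis le_zero_eq)
  then have "b - a \<le> 0" by (simp only: ennreal_eq_0_iff)
  with assms(2) show False by linarith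
qed

lemma small_limit:
  fixes c K h0 :: real
  assumes "h0 > 0" and H: "\<forall>h. 0 < h \<and> h < h0 \<longrightarrow> c \<le> h * K"
  shows "c \<le> 0"
proof (rule ccontr)
  assume "\<not> c \<le> 0"
  then have c: "c > 0" by simp
  define h where "h = min (h0/2) (c / (\<bar>K\<bar> + 1))"
  have h: "0 < h" "h < h0" using c assms(1) by (auto simp: h_def)
  have "h * K \<le> h * \<bar>K\<bar>" using h by (simp add: mult_left_mono)
  also have "\<dots> \<le> c / (\<bar>K\<bar> + 1) * \<bar>K\<bar>" using h by (intro mult_right_mono) (auto simp: h_def)
  also have "\<dots> < c" using c by (simp add: field_simps)
  finally show False using H h by force
qed

lemma div1:
  fixes h a W :: real
  assumes "h > 0" "W \<ge> 0" "-2*h*a + h^2*W \<le> 0"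
  shows "-a \<le> h*W"
proof -
  have "h * (-2*a + h*W) \<le> 0" using assms(3) by (simp add: algebra_simps power2_eq_square)
  then have "-2*a + h*W \<le> 0" using assms(1) by (simp add: mult_le_0_iff)
  moreover have "h*W \<ge> 0" using assms by simp
  ultimately show ?thesis by linarith
qed

lemma div2:
  fixes h a W :: real
  assumes "h > 0" "W \<ge> 0" "-2*h*a + h^2*W \<ge> 0"
  shows "a \<le> h*W"
proof -
  have "h * (-2*a + h*W) \<ge> 0" using assms(3) by (simp add: algebra_simps power2_eq_square)
  then have "-2*a + h*W \<ge> 0" using assms(1) by (simp add: zero_le_mult_iff)
  moreover have "h*W \<ge> 0" using assms by simp
  ultimately show ?thesis by linarith
qed

lemma norm_sq_expand:
  fixes d w :: "'a::real_inner"
  shows "(norm (d - h *\<^sub>R w))\<^sup>2 = (norm d)\<^sup>2 - 2*h*inner d w + h\<^sup>2*(norm w)\<^sup>2"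
  unfolding power2_norm_eq_inner by (simp add: inner_diff_left inner_diff_right inner_commute algebra_simps power2_eq_square)



lemma seg_affine:
  fixes p :: curve and n :: nat and k :: int
  assumes n: "n > 0"
    and aff: "\<forall>k::int. \<forall>l\<in>{0..1::real}.
         p (a + (of_int k + l) / real n) = (1 - l) *\<^sub>R p (a + of_int k / real n)
                                            + l *\<^sub>R p (a + (of_int k + 1) / real n)"
    and y: "a + of_int k / real n \<le> y" "y \<le> a + (of_int k + 1) / real n"
    and z: "a + of_int k / real n \<le> z" "z \<le> a + (of_int k + 1) / real n"
  shows "p z - p y = (z - y) *\<^sub>R (real n *\<^sub>R (p (a + (of_int k + 1) / real n) - p (a + of_int k / real n)))"
proof -
  define v0 where "v0 = p (a + of_int k / real n)"
  define v1 where "v1 = p (a + (of_int k + 1) / real n)"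
  have rep: "p x = v0 + ((x - a) * real n - of_int k) *\<^sub>R (v1 - v0)"
    if "a + of_int k / real n \<le> x" "x \<le> a + (of_int k + 1) / real n" for x
  proof -
    define l where "l = (x - a) * real n - of_int k"
    have l: "l \<in> {0..1}" using that n by (auto simp: l_def field_simps)
    have xe: "x = a + (of_int k + l) / real n" using n by (simp add: l_def field_simps)
    have "p x = (1 - l) *\<^sub>R v0 + l *\<^sub>R v1" using aff l unfolding v0_def v1_def xe by blast
    also have "\<dots> = v0 + l *\<^sub>R (v1 - v0)" by (simp add: algebra_simps)
    finally show ?thesis by (simp add: l_def)
  qed
  have "p z - p y = (((z - a) * real n - of_int k) - ((y - a) * real n - of_int k)) *\<^sub>R (v1 - v0)"
    unfolding rep[OF y] rep[OF z] by (simp add: scaleR_diff_left)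
  also have "\<dots> = (z - y) *\<^sub>R (real n *\<^sub>R (v1 - v0))" by (simp add: algebra_simps)
  finally show ?thesis by (simp add: v0_def v1_def)
qed

lemma poly_extremum:
  fixes p g' :: curve and D :: "real^3"
  assumes P: "p \<in> polygons n"
   and AE: "AE y in lborel. norm (vector_derivative p (at y) - g' y) \<le> e"
   and Lg: "\<forall>x y. norm (g' x - g' y) \<le> Lg * \<bar>x - y\<bar>"
   and ext: "local_extremum (\<lambda>u. (norm (D - p u))\<^sup>2) x"
  shows "\<bar>inner (g' x) (D - p x)\<bar> \<le> (e + Lg / real n) * norm (D - p x)"
proof -
  from P obtain a where n: "n > 0" and aff: "\<forall>k::int. \<forall>l\<in>{0..1::real}.
         p (a + (of_int k + l) / real n) = (1 - l) *\<^sub>R p (a + of_int k / real n)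
                                            + l *\<^sub>R p (a + (of_int k + 1) / real n)"
    unfolding polygons_def by blast
  define w where "w k = real n *\<^sub>R (p (a + (of_int k + 1) / real n) - p (a + of_int k / real n))" for k :: int
  have "norm (g' 0 - g' 1) \<le> Lg" using Lg[rule_format, of 0 1] by simp
  then have Lg0: "Lg \<ge> 0" using norm_ge_zero order_trans by blast
  have seg: "p z - p y = (z - y) *\<^sub>R w k"
    if "a + of_int k / real n \<le> y" "y \<le> a + (of_int k + 1) / real n"
       "a + of_int k / real n \<le> z" "z \<le> a + (of_int k + 1) / real n" for k y z
    using seg_affine[OF n aff that] by (simp add: w_def)
  have dirb: "norm (w k - g' z) \<le> e + Lg / real n"
    if z: "a + of_int k / real n \<le> z" "z \<le> a + (of_int k + 1) / real n" for k z
  proof -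
    have lt: "a + of_int k / real n < a + (of_int k + 1) / real n" using n by (simp add: divide_strict_right_mono)
    obtain y where y: "a + of_int k / real n < y" "y < a + (of_int k + 1) / real n"
      and yb: "norm (vector_derivative p (at y) - g' y) \<le> e"
      using AE_ex[OF AE lt] by blast
    have "((\<lambda>u. p y + (u - y) *\<^sub>R w k) has_vector_derivative w k) (at y)"
      by (auto intro!: derivative_eq_intros)
    then have "(p has_vector_derivative w k) (at y)"
    proof (rule has_vector_derivative_transform_within_open[where S="{a + of_int k / real n <..< a + (of_int k + 1) / real n}"])
      show "y \<in> {a + of_int k / real n <..< a + (of_int k + 1) / real n}" using y by simp
      fix u assume "u \<in> {a + of_int k / real n <..< a + (of_int k + 1) / real n}"
      then show "p y + (u - y) *\<^sub>R w k = p u" using seg[of k y u] y by (auto simp: algebra_simps)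
    qed simp
    then have vd: "vector_derivative p (at y) = w k" by (rule vector_derivative_at)
    have "\<bar>y - z\<bar> \<le> 1 / real n" using y z n by (auto simp: field_simps abs_if)
    then have "Lg * \<bar>y - z\<bar> \<le> Lg / real n" using Lg0 by (metis mult_left_mono times_divide_eq_right mult.right_neutral)
    moreover have "norm (w k - g' z) \<le> norm (w k - g' y) + norm (g' y - g' z)"
      by (rule tri3)
    ultimately show ?thesis using yb[unfolded vd] Lg[rule_format, of y z] by linarith
  qed
  define X where "X = (x - a) * real n"
  define kr where "kr = \<lfloor>X\<rfloor>"
  define kl where "kl = \<lceil>X\<rceil> - 1"
  have xX: "x = a + X / real n" using n by (simp add: X_def)
  have kr1: "a + of_int kr / real n \<le> x" using n unfolding xX kr_def by (simp add: divide_right_mono)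
  have kr2: "x < a + (of_int kr + 1) / real n" using n unfolding xX kr_def by (simp add: divide_strict_right_mono)
  have kl1: "a + of_int kl / real n < x" using n unfolding xX kl_def
    by (simp add: divide_strict_right_mono) (intro divide_strict_right_mono, linarith, simp)
  have kl2: "x \<le> a + (of_int kl + 1) / real n" using n unfolding xX kl_def by (simp add: divide_right_mono)
  define hr where "hr = a + (of_int kr + 1) / real n - x"
  define hl where "hl = x - (a + of_int kl / real n)"
  have hr0: "hr > 0" "hl > 0" using kr2 kl1 by (auto simp: hr_def hl_def)
  define dd where "dd = D - p x"
  define f where "f = (\<lambda>u. (norm (D - p u))\<^sup>2)"
  have fr: "f (x + h) = (norm dd)\<^sup>2 - 2*h*inner dd (w kr) + h\<^sup>2*(norm (w kr))\<^sup>2" if "0 < h" "h < hr" for h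
  proof -
    have "p (x + h) - p x = ((x + h) - x) *\<^sub>R w kr" using that kr1 kr2 by (intro seg) (auto simp: hr_def)
    then have "D - p (x + h) = dd - h *\<^sub>R w kr" by (simp add: dd_def algebra_simps)
    then show ?thesis by (simp add: f_def norm_sq_expand)
  qed
  have fl: "f (x - h) = (norm dd)\<^sup>2 - 2*(-h)*inner dd (w kl) + h\<^sup>2*(norm (w kl))\<^sup>2" if "0 < h" "h < hl" for h
  proof -
    have "p (x - h) - p x = ((x - h) - x) *\<^sub>R w kl" using that kl1 kl2 by (intro seg) (auto simp: hl_def)
    then have "D - p (x - h) = dd - (-h) *\<^sub>R w kl" by (simp add: dd_def algebra_simps)
    then show ?thesis using norm_sq_expand[of dd "-h" "w kl"] by (simp add: f_def)
  qed
  have fx: "f x = (norm dd)\<^sup>2" by (simp add: f_def dd_def)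
  from ext obtain \<epsilon> where \<epsilon>: "\<epsilon> > 0" and cs: "(\<forall>y\<in>ball x \<epsilon>. f y \<le> f x) \<or> (\<forall>y\<in>ball x \<epsilon>. f x \<le> f y)"
    unfolding local_extremum_def f_def by blast
  have inb: "x + h \<in> ball x \<epsilon>" "x - h \<in> ball x \<epsilon>" if "0 < h" "h < \<epsilon>" for h
    using that by (auto simp: dist_real_def)
  have signs: "(inner dd (w kr) \<ge> 0 \<and> inner dd (w kl) \<le> 0) \<or> (inner dd (w kr) \<le> 0 \<and> inner dd (w kl) \<ge> 0)"
    using cs
  proof
    assume M: "\<forall>y\<in>ball x \<epsilon>. f y \<le> f x"
    have A: "\<forall>h. 0 < h \<and> h < min \<epsilon> hr \<longrightarrow> - inner dd (w kr) \<le> h * (norm (w kr))\<^sup>2"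
    proof (intro allI impI)
      fix h assume h: "0 < h \<and> h < min \<epsilon> hr"
      then have "f (x + h) \<le> f x" using M inb by auto
      then have "-2*h*inner dd (w kr) + h^2*(norm (w kr))\<^sup>2 \<le> 0" using fr[of h] fx h by simp
      then show "- inner dd (w kr) \<le> h * (norm (w kr))\<^sup>2" using h by (intro div1) auto
    qed
    have r1: "- inner dd (w kr) \<le> 0" using small_limit[OF _ A] \<epsilon> hr0 by simp
    have B: "\<forall>h. 0 < h \<and> h < min \<epsilon> hl \<longrightarrow> inner dd (w kl) \<le> h * (norm (w kl))\<^sup>2"
    proof (intro allI impI)
      fix h assume h: "0 < h \<and> h < min \<epsilon> hl"
      then have "f (x - h) \<le> f x" using M inb by auto
      then have "-2*h*(- inner dd (w kl)) + h^2*(norm (w kl))\<^sup>2 \<le> 0" using fl[of h] fx h by simp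
      then show "inner dd (w kl) \<le> h * (norm (w kl))\<^sup>2" using div1[where h=h and a="- inner dd (w kl)" and W="(norm (w kl))\<^sup>2"] h by auto
    qed
    have "inner dd (w kl) \<le> 0" using small_limit[OF _ B] \<epsilon> hr0 by simp
    with r1 show ?thesis by simp
  next
    assume M: "\<forall>y\<in>ball x \<epsilon>. f x \<le> f y"
    have A: "\<forall>h. 0 < h \<and> h < min \<epsilon> hr \<longrightarrow> inner dd (w kr) \<le> h * (norm (w kr))\<^sup>2"
    proof (intro allI impI)
      fix h assume h: "0 < h \<and> h < min \<epsilon> hr"
      then have "f x \<le> f (x + h)" using M inb by auto
      then have "-2*h*inner dd (w kr) + h^2*(norm (w kr))\<^sup>2 \<ge> 0" using fr[of h] fx h by simp
      then show "inner dd (w kr) \<le> h * (norm (w kr))\<^sup>2" using h by (intro div2) auto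
    qed
    have r1: "inner dd (w kr) \<le> 0" using small_limit[OF _ A] \<epsilon> hr0 by simp
    have B: "\<forall>h. 0 < h \<and> h < min \<epsilon> hl \<longrightarrow> - inner dd (w kl) \<le> h * (norm (w kl))\<^sup>2"
    proof (intro allI impI)
      fix h assume h: "0 < h \<and> h < min \<epsilon> hl"
      then have "f x \<le> f (x - h)" using M inb by auto
      then have "-2*h*(- inner dd (w kl)) + h^2*(norm (w kl))\<^sup>2 \<ge> 0" using fl[of h] fx h by simp
      then show "- inner dd (w kl) \<le> h * (norm (w kl))\<^sup>2" using div2[where h=h and a="- inner dd (w kl)" and W="(norm (w kl))\<^sup>2"] h by auto
    qed
    have "- inner dd (w kl) \<le> 0" using small_limit[OF _ B] \<epsilon> hr0 by simp
    with r1 show ?thesis by simp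
  qed
  define E where "E = e + Lg / real n"
  have br: "norm (w kr - g' x) \<le> E" using dirb[of kr x] kr1 kr2 by (simp add: E_def)
  have bl: "norm (w kl - g' x) \<le> E" using dirb[of kl x] kl1 kl2 by (simp add: E_def)
  have cr: "\<bar>inner dd (w kr - g' x)\<bar> \<le> norm dd * E"
    using Cauchy_Schwarz_ineq2[of dd "w kr - g' x"] br by (meson mult_left_mono norm_ge_zero order_trans)
  have cl: "\<bar>inner dd (w kl - g' x)\<bar> \<le> norm dd * E"
    using Cauchy_Schwarz_ineq2[of dd "w kl - g' x"] bl by (meson mult_left_mono norm_ge_zero order_trans)
  have "\<bar>inner dd (g' x)\<bar> \<le> norm dd * E"
    using signs cr cl by (auto simp: inner_diff_right abs_le_iff)
  then show ?thesis by (simp add: dd_def E_def inner_commute mult.commute)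
qed



lemma cont_mod:
  fixes \<gamma> g' :: curve
  assumes per: "\<forall>x. \<gamma> (x + 1) = \<gamma> x" and inj: "inj_on \<gamma> {0..<1}" and c\<gamma>: "continuous_on UNIV \<gamma>"
    and gper: "\<forall>x. g' (x + 1) = g' x" and cg: "continuous_on UNIV g'" and \<epsilon>: "\<epsilon> > 0"
  shows "\<exists>\<delta>>0. \<forall>x. norm (\<gamma> x - \<gamma> t) < \<delta> \<longrightarrow> norm (g' x - g' t) < \<epsilon>"
proof -
  define C where "C = {0..1} \<inter> {x. \<epsilon> \<le> norm (g' x - g' t)}"
  have "closed {x. \<epsilon> \<le> norm (g' x - g' t)}"
    by (intro closed_Collect_le continuous_intros cg)
  then have cC: "compact C" unfolding C_def by (intro compact_Int_closed) auto
  have red: "norm (g' x - g' t) < \<epsilon>" if "frac x \<notin> C" for x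
  proof -
    note that
    moreover have "frac x \<in> {0..1}" by (auto simp: less_imp_le[OF frac_lt_1])
    ultimately have "norm (g' (frac x) - g' t) < \<epsilon>" by (auto simp: C_def)
    then show ?thesis using frac_shift[OF gper] by simp
  qed
  show ?thesis
  proof (cases "C = {}")
    case True
    then show ?thesis using red by (intro exI[of _ 1]) auto
  next
    case False
    have "continuous_on C (\<lambda>x. norm (\<gamma> x - \<gamma> t))"
      by (intro continuous_intros continuous_on_subset[OF c\<gamma>]) auto
    then obtain x0 where x0: "x0 \<in> C" and mn: "\<forall>y\<in>C. norm (\<gamma> x0 - \<gamma> t) \<le> norm (\<gamma> y - \<gamma> t)"
      using continuous_attains_inf[OF cC False] by blast
    have pos: "norm (\<gamma> x0 - \<gamma> t) > 0"
    proof (rule ccontr)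
      assume "\<not> ?thesis"
      then have "\<gamma> x0 = \<gamma> t" by simp
      then have "x0 - t \<in> \<int>" using inj_mod[OF per inj] by blast
      then obtain k where "x0 - t = of_int k" by (auto elim: Ints_cases)
      then have "x0 = t + of_int k" by simp
      then have "g' x0 = g' t" using periodic_int[OF gper] by simp
      then show False using x0 \<epsilon> by (simp add: C_def)
    qed
    show ?thesis
    proof (intro exI[of _ "norm (\<gamma> x0 - \<gamma> t)"] conjI pos allI impI)
      fix x assume H: "norm (\<gamma> x - \<gamma> t) < norm (\<gamma> x0 - \<gamma> t)"
      show "norm (g' x - g' t) < \<epsilon>"
      proof (rule red)
        show "frac x \<notin> C"
        proof
          assume yC: "frac x \<in> C"
          then have "norm (\<gamma> x0 - \<gamma> t) \<le> norm (\<gamma> (frac x) - \<gamma> t)" using mn by blast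
          then show False using H frac_shift[OF per, of x] by simp
        qed
      qed
    qed
  qed
qed



lemma key_limit:
  fixes \<gamma> g' :: curve and D :: "real^3"
  assumes cont: "\<forall>\<epsilon>>0. \<exists>\<delta>>0. \<forall>x. norm (\<gamma> x - \<gamma> t) < \<delta> \<longrightarrow> norm (g' x - g' t) < \<epsilon>"
   and B: "\<forall>x. norm (g' x) \<le> B"
   and H: "\<forall>\<eta>>0. \<exists>x d. norm (\<gamma> x - \<gamma> t) \<le> \<eta> \<and> norm (d - D) \<le> \<eta> \<and> \<bar>inner (g' x) d\<bar> \<le> \<eta> * norm d"
  shows "inner (g' t) D = 0"
proof (rule ccontr)
  assume ne: "inner (g' t) D \<noteq> 0"
  define r where "r = \<bar>inner (g' t) D\<bar>"
  have r: "r > 0" using ne by (simp add: r_def)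
  have B0: "B \<ge> 0" using B norm_ge_zero order_trans by blast
  define \<epsilon> where "\<epsilon> = r / (2 * (norm D + 1))"
  have "2 * (norm D + 1) > 0" using norm_ge_zero[of D] by (smt (verit))
  then have \<epsilon>: "\<epsilon> > 0" unfolding \<epsilon>_def using divide_pos_pos[OF r] by blast
  obtain \<delta> where \<delta>: "\<delta> > 0" and cd: "\<forall>x. norm (\<gamma> x - \<gamma> t) < \<delta> \<longrightarrow> norm (g' x - g' t) < \<epsilon>"
    using cont \<epsilon> by blast
  define \<eta> where "\<eta> = min (\<delta>/2) (min 1 (r / (4 * (B + norm D + 2))))"
  have q: "4 * (B + norm D + 2) > 0" using B0 norm_ge_zero[of D] by (smt (verit))
  define X where "X = r / (4 * (B + norm D + 2))"
  have X: "X > 0" unfolding X_def using divide_pos_pos[OF r q] .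
  have \<eta>: "\<eta> > 0" "\<eta> \<le> \<delta>/2" "\<eta> \<le> 1" "\<eta> \<le> r / (4 * (B + norm D + 2))"
    unfolding \<eta>_def X_def[symmetric] using \<delta> X by auto
  obtain x d where x: "norm (\<gamma> x - \<gamma> t) \<le> \<eta>" and d: "norm (d - D) \<le> \<eta>"
    and i: "\<bar>inner (g' x) d\<bar> \<le> \<eta> * norm d" using H \<eta>(1) by blast
  have gx: "norm (g' x - g' t) < \<epsilon>" using cd x \<eta> \<delta> by auto
  have eq: "inner (g' t) D = inner (g' t - g' x) D + inner (g' x) (D - d) + inner (g' x) d"
    by (simp add: inner_diff_left inner_diff_right)
  have t1: "\<bar>inner (g' t - g' x) D\<bar> \<le> \<epsilon> * norm D"
  proof -
    have "\<bar>inner (g' t - g' x) D\<bar> \<le> norm (g' t - g' x) * norm D" by (rule Cauchy_Schwarz_ineq2)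
    also have "\<dots> \<le> \<epsilon> * norm D" using gx by (intro mult_right_mono) (auto simp: norm_minus_commute)
    finally show ?thesis .
  qed
  have t2: "\<bar>inner (g' x) (D - d)\<bar> \<le> B * \<eta>"
  proof -
    have "\<bar>inner (g' x) (D - d)\<bar> \<le> norm (g' x) * norm (D - d)" by (rule Cauchy_Schwarz_ineq2)
    also have "\<dots> \<le> B * \<eta>" using B d B0 by (intro mult_mono) (auto simp: norm_minus_commute)
    finally show ?thesis .
  qed
  have nd: "norm d \<le> norm D + 1"
    using d \<eta>(3) norm_triangle_ineq[of "d - D" D] by simp
  have t3: "\<bar>inner (g' x) d\<bar> \<le> \<eta> * (norm D + 1)"
    using i nd \<eta>(1) by (meson less_imp_le mult_left_mono order_trans)
  have "\<epsilon> * norm D \<le> r / 2"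
  proof -
    have E1: "\<epsilon> * norm D = (r/2) * (norm D / (norm D + 1))" by (simp add: \<epsilon>_def field_simps)
    have "0 < norm D + 1" using norm_ge_zero[of D] by linarith
    then have "norm D / (norm D + 1) \<le> 1" by simp
    then have "(r/2) * (norm D / (norm D + 1)) \<le> (r/2) * 1" using r by (intro mult_left_mono) auto
    then show ?thesis using E1 by simp
  qed
  moreover have "B * \<eta> + \<eta> * (norm D + 1) < r / 2"
  proof -
    have "B * \<eta> + \<eta> * (norm D + 1) = \<eta> * (B + norm D + 1)" by (simp add: algebra_simps)
    also have "\<dots> \<le> r / (4 * (B + norm D + 2)) * (B + norm D + 1)"
      using \<eta>(4) B0 by (intro mult_right_mono) auto
    also have "\<dots> < r / 2"
    proof -
      have "r / (4 * (B + norm D + 2)) * (B + norm D + 1) \<le> r / (4 * (B + norm D + 2)) * (B + norm D + 2)"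
        using r B0 by (intro mult_left_mono) auto
      also have "\<dots> = r / 4" using div_mul_cancel4[OF q] .
      finally have "r / (4 * (B + norm D + 2)) * (B + norm D + 1) \<le> r / 4" .
      then show ?thesis using r by linarith
    qed
    finally show ?thesis .
  qed
  ultimately have "\<bar>inner (g' t) D\<bar> < r" using eq t1 t2 t3 by linarith
  then show False by (simp add: r_def)
qed

lemma conv_pt:
  fixes \<gamma> :: curve and p :: "nat \<Rightarrow> curve"
  assumes W: "W1inf_tendsto p \<gamma>" and c\<gamma>: "\<forall>x. isCont \<gamma> x"
    and per: "\<forall>x. \<gamma> (x + 1) = \<gamma> x" and S: "S1_tendsto sn s" and \<eta>: "\<eta> > 0"
  shows "\<forall>\<^sub>F n in sequentially. norm (p n (sn n) - \<gamma> s) \<le> \<eta>"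
proof -
  from S obtain k :: "nat \<Rightarrow> int" where k: "(\<lambda>n. sn n - of_int (k n)) \<longlonglongrightarrow> s"
    unfolding S1_tendsto_def by blast
  have lim: "(\<lambda>n. \<gamma> (sn n - of_int (k n))) \<longlonglongrightarrow> \<gamma> s"
    using isCont_tendsto_compose[OF c\<gamma>[rule_format, of s] k] .
  have e1: "\<forall>\<^sub>F n in sequentially. dist (\<gamma> (sn n - of_int (k n))) (\<gamma> s) < \<eta>/2"
    using tendsto_iff[THEN iffD1, OF lim, rule_format, of "\<eta>/2"] \<eta> by simp
  have h2: "\<eta>/2 > 0" using \<eta> by simp
  have e2: "\<forall>\<^sub>F n in sequentially. \<forall>t. norm (p n t - \<gamma> t) \<le> \<eta>/2"
    using W1inf_tendsto_def[THEN iffD1, OF W, rule_format, OF h2] by (rule eventually_mono) blast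
  show ?thesis
    using e1 e2
  proof eventually_elim
    case (elim n)
    have "\<gamma> (sn n - of_int (k n)) = \<gamma> (sn n)"
      using periodic_int[OF per, of "sn n" "- k n"] by simp
    then have "norm (\<gamma> (sn n) - \<gamma> s) < \<eta>/2" using elim(1) by (simp add: dist_norm)
    moreover have "norm (p n (sn n) - \<gamma> s) \<le> norm (p n (sn n) - \<gamma> (sn n)) + norm (\<gamma> (sn n) - \<gamma> s)"
      by (rule tri3)
    ultimately show ?case using elim(2)[rule_format, of "sn n"] by linarith
  qed
qed



theorem lemma13:
  fixes K :: "(real^3) set set" and \<gamma> :: curve
    and p :: "nat \<Rightarrow> curve" and s t :: real and sn tn :: "nat \<Rightarrow> real"
  assumes "tame_knot_class K"
    and "\<gamma> \<in> curves_in_class K" and "C11 \<gamma>"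
    and "\<forall>\<^sub>F n in sequentially. p n \<in> polygons n"
    and "W1inf_tendsto p \<gamma>"
    and "\<forall>\<^sub>F n in sequentially. \<not> S1_eq (sn n) (tn n)"
    and "S1_tendsto sn s" and "S1_tendsto tn t" and "\<not> S1_eq s t"
    and "\<forall>\<^sub>F n in sequentially. (p n (sn n), p n (tn n)) \<in> dcrit_poly (p n)"
  shows "(\<gamma> s, \<gamma> t) \<in> dcrit_C1 \<gamma>"
proof -
  from assms(3) obtain g' Lg where der: "\<forall>t. (\<gamma> has_vector_derivative g' t) (at t)"
    and Lg: "\<forall>x y. norm (g' x - g' y) \<le> Lg * \<bar>x - y\<bar>" unfolding C11_def by blast
  have vd: "\<And>t. vector_derivative \<gamma> (at t) = g' t" using der vector_derivative_at by blast
  have g1: "\<gamma> \<in> arclength_curves" and inj: "inj_on \<gamma> {0..<1}"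
    using assms(2) unfolding curves_in_class_def mem_Collect_eq by blast+
  have per1: "periodic1 \<gamma>"
    and AE\<gamma>: "AE t in lborel. \<gamma> differentiable (at t) \<and> norm (vector_derivative \<gamma> (at t)) = 1"
    using g1 unfolding arclength_curves_def mem_Collect_eq by blast+
  have per: "\<forall>x. \<gamma> (x + 1) = \<gamma> x" using per1 unfolding periodic1_def by blast
  have isc: "\<forall>x. isCont \<gamma> x" using der has_vector_derivative_continuous by blast
  then have c\<gamma>: "continuous_on UNIV \<gamma>" by (simp add: continuous_at_imp_continuous_on)
  have "norm (g' 0 - g' 1) \<le> Lg" using Lg[rule_format, of 0 1] by simp
  then have Lg0: "Lg \<ge> 0" using norm_ge_zero order_trans by blast
  have cg: "continuous_on UNIV g'"
  proof -
    have "lipschitz_on Lg UNIV g'" unfolding lipschitz_on_def using Lg Lg0 by (simp add: dist_norm dist_real_def)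
    then show ?thesis by (rule lipschitz_on_continuous_on)
  qed
  have gper: "\<forall>x. g' (x + 1) = g' x"
  proof
    fix x
    have "((\<lambda>y. y + 1) has_vector_derivative 1) (at x)" by (auto intro!: derivative_eq_intros)
    from vector_diff_chain_at[OF this der[rule_format, of "x + 1"]]
    have "((\<gamma> \<circ> (\<lambda>y. y + 1)) has_vector_derivative g' (x + 1)) (at x)" by simp
    moreover have "\<gamma> \<circ> (\<lambda>y. y + 1) = \<gamma>" using per by (auto simp: o_def)
    ultimately have "(\<gamma> has_vector_derivative g' (x + 1)) (at x)" by simp
    then show "g' (x + 1) = g' x" using der vector_derivative_unique_at by blast
  qed
  have Bd: "\<forall>x. norm (g' x) \<le> 1 + Lg"
  proof
    fix x
    have "AE y in lborel. norm (g' y) = 1" using AE\<gamma> by (rule eventually_mono) (simp add: vd)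
    then obtain y where y: "x < y" "y < x + 1" "norm (g' y) = 1" using AE_ex[of "\<lambda>y. norm (g' y) = 1" x "x+1"] by auto
    have "norm (g' x) \<le> norm (g' y) + norm (g' x - g' y)" by (rule norm_triangle_sub)
    also have "\<dots> \<le> 1 + Lg * \<bar>x - y\<bar>" using Lg[rule_format, of x y] y(3) by simp
    also have "Lg * \<bar>x - y\<bar> \<le> Lg * 1" using y Lg0 by (intro mult_left_mono) auto
    finally show "norm (g' x) \<le> 1 + Lg" by simp
  qed
  have neq: "\<gamma> s \<noteq> \<gamma> t" using inj_mod[OF per inj, of s t] assms(9) by (auto simp: S1_eq_def)
  have contt: "\<forall>\<epsilon>>0. \<exists>\<delta>>0. \<forall>x. norm (\<gamma> x - \<gamma> t) < \<delta> \<longrightarrow> norm (g' x - g' t) < \<epsilon>"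
    using cont_mod[OF per inj c\<gamma> gper cg] by blast
  have conts: "\<forall>\<epsilon>>0. \<exists>\<delta>>0. \<forall>x. norm (\<gamma> x - \<gamma> s) < \<delta> \<longrightarrow> norm (g' x - g' s) < \<epsilon>"
    using cont_mod[OF per inj c\<gamma> gper cg] by blast
  have approx: "\<exists>n t' s'. norm (p n (sn n) - \<gamma> s) \<le> \<eta>/2 \<and> norm (p n (tn n) - \<gamma> t) \<le> \<eta>/2
      \<and> norm (\<gamma> s' - \<gamma> t) \<le> \<eta> \<and> norm (\<gamma> t' - \<gamma> s) \<le> \<eta>
      \<and> p n t' = p n (sn n) \<and> p n s' = p n (tn n)
      \<and> \<bar>inner (g' s') (p n t' - p n s')\<bar> \<le> \<eta> * norm (p n t' - p n s')
      \<and> \<bar>inner (g' t') (p n s' - p n t')\<bar> \<le> \<eta> * norm (p n s' - p n t')"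
    if \<eta>: "\<eta> > 0" for \<eta>
  proof -
    obtain N :: nat where N: "2 * Lg / \<eta> < real N" using reals_Archimedean2 by blast
    have h2: "\<eta>/2 > 0" using \<eta> by simp
    have W: "\<forall>\<^sub>F n in sequentially. (\<forall>x. norm (p n x - \<gamma> x) \<le> \<eta>/2) \<and>
          (AE x in lborel. norm (vector_derivative (p n) (at x) - vector_derivative \<gamma> (at x)) \<le> \<eta>/2)"
      using W1inf_tendsto_def[THEN iffD1, OF assms(5), rule_format, OF h2] .
    have Wa: "\<forall>\<^sub>F n in sequentially. \<forall>x. norm (p n x - \<gamma> x) \<le> \<eta>/2"
      using W by (rule eventually_mono) blast
    have Wb: "\<forall>\<^sub>F n in sequentially. AE x in lborel. norm (vector_derivative (p n) (at x) - g' x) \<le> \<eta>/2"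
      using W by (rule eventually_mono) (simp add: vd)
    have ev: "\<forall>\<^sub>F n in sequentially. p n \<in> polygons n \<and> (p n (sn n), p n (tn n)) \<in> dcrit_poly (p n)
        \<and> (\<forall>x. norm (p n x - \<gamma> x) \<le> \<eta>/2)
        \<and> (AE x in lborel. norm (vector_derivative (p n) (at x) - g' x) \<le> \<eta>/2)
        \<and> norm (p n (sn n) - \<gamma> s) \<le> \<eta>/2 \<and> norm (p n (tn n) - \<gamma> t) \<le> \<eta>/2 \<and> n \<ge> N"
      by (intro eventually_conj assms(4) assms(10) Wa Wb conv_pt[OF assms(5) isc per assms(7) h2]
          conv_pt[OF assms(5) isc per assms(8) h2] eventually_ge_at_top)
    then obtain N' where N': "\<forall>n\<ge>N'. p n \<in> polygons n \<and> (p n (sn n), p n (tn n)) \<in> dcrit_poly (p n)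
        \<and> (\<forall>x. norm (p n x - \<gamma> x) \<le> \<eta>/2)
        \<and> (AE x in lborel. norm (vector_derivative (p n) (at x) - g' x) \<le> \<eta>/2)
        \<and> norm (p n (sn n) - \<gamma> s) \<le> \<eta>/2 \<and> norm (p n (tn n) - \<gamma> t) \<le> \<eta>/2 \<and> n \<ge> N"
      unfolding eventually_sequentially by blast
    define n where "n = N'"
    have n: "p n \<in> polygons n" "(p n (sn n), p n (tn n)) \<in> dcrit_poly (p n)"
        "\<forall>x. norm (p n x - \<gamma> x) \<le> \<eta>/2"
        "AE x in lborel. norm (vector_derivative (p n) (at x) - g' x) \<le> \<eta>/2"
        "norm (p n (sn n) - \<gamma> s) \<le> \<eta>/2" "norm (p n (tn n) - \<gamma> t) \<le> \<eta>/2" "n \<ge> N"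
      using N'[rule_format, of n] unfolding n_def by blast+
    from n(2) obtain t' s' where ts: "p n (sn n) = p n t'" "p n (tn n) = p n s'"
      and e1: "local_extremum (\<lambda>u. (norm (p n t' - p n u))\<^sup>2) s'"
      and e2: "local_extremum (\<lambda>v. (norm (p n v - p n s'))\<^sup>2) t'"
      unfolding dcrit_poly_def mem_Collect_eq prod.inject by blast
    have e2': "local_extremum (\<lambda>v. (norm (p n s' - p n v))\<^sup>2) t'"
      using e2 by (simp add: norm_minus_commute)
    have npos: "n > 0" using n(1) unfolding polygons_def mem_Collect_eq by blast
    have LgE: "Lg / real n \<le> \<eta>/2"
    proof -
      have "2 * Lg < real N * \<eta>" using N \<eta> by (simp add: field_simps)
      also have "\<dots> \<le> real n * \<eta>" using n(7) \<eta> by (intro mult_right_mono) auto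
      finally show ?thesis using npos by (simp add: field_simps)
    qed
    have i1: "\<bar>inner (g' s') (p n t' - p n s')\<bar> \<le> \<eta> * norm (p n t' - p n s')"
    proof -
      have "\<bar>inner (g' s') (p n t' - p n s')\<bar> \<le> (\<eta>/2 + Lg / real n) * norm (p n t' - p n s')"
        by (rule poly_extremum[OF n(1) n(4) Lg e1])
      also have "\<dots> \<le> \<eta> * norm (p n t' - p n s')" using LgE by (intro mult_right_mono) (linarith, simp)
      finally show ?thesis .
    qed
    have i2: "\<bar>inner (g' t') (p n s' - p n t')\<bar> \<le> \<eta> * norm (p n s' - p n t')"
    proof -
      have "\<bar>inner (g' t') (p n s' - p n t')\<bar> \<le> (\<eta>/2 + Lg / real n) * norm (p n s' - p n t')"
        by (rule poly_extremum[OF n(1) n(4) Lg e2'])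
      also have "\<dots> \<le> \<eta> * norm (p n s' - p n t')" using LgE by (intro mult_right_mono) (linarith, simp)
      finally show ?thesis .
    qed
    have d1: "norm (\<gamma> s' - \<gamma> t) \<le> \<eta>"
    proof -
      have "norm (\<gamma> s' - \<gamma> t) \<le> norm (\<gamma> s' - p n s') + norm (p n s' - \<gamma> t)"
        by (rule tri3)
      moreover have "norm (\<gamma> s' - p n s') \<le> \<eta>/2" using n(3) by (simp add: norm_minus_commute)
      ultimately show ?thesis using n(6) ts by simp
    qed
    have d2: "norm (\<gamma> t' - \<gamma> s) \<le> \<eta>"
    proof -
      have "norm (\<gamma> t' - \<gamma> s) \<le> norm (\<gamma> t' - p n t') + norm (p n t' - \<gamma> s)"
        by (rule tri3)
      moreover have "norm (\<gamma> t' - p n t') \<le> \<eta>/2" using n(3) by (simp add: norm_minus_commute)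
      ultimately show ?thesis using n(5) ts by simp
    qed
    show ?thesis
      apply (rule exI[of _ n], rule exI[of _ t'], rule exI[of _ s'])
      using n(5,6) d1 d2 ts[symmetric] i1 i2 by (intro conjI)
  qed
  have k1: "inner (g' t) (\<gamma> s - \<gamma> t) = 0"
  proof (rule key_limit[OF contt Bd])
    show "\<forall>\<eta>>0. \<exists>x d. norm (\<gamma> x - \<gamma> t) \<le> \<eta> \<and> norm (d - (\<gamma> s - \<gamma> t)) \<le> \<eta> \<and> \<bar>inner (g' x) d\<bar> \<le> \<eta> * norm d"
    proof (intro allI impI)
      fix \<eta> :: real assume \<eta>: "\<eta> > 0"
      from approx[OF \<eta>] obtain n t' s' where H: "norm (p n (sn n) - \<gamma> s) \<le> \<eta>/2" "norm (p n (tn n) - \<gamma> t) \<le> \<eta>/2"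
        "norm (\<gamma> s' - \<gamma> t) \<le> \<eta>" "p n t' = p n (sn n)" "p n s' = p n (tn n)"
        "\<bar>inner (g' s') (p n t' - p n s')\<bar> \<le> \<eta> * norm (p n t' - p n s')" by blast
      have "norm ((p n t' - p n s') - (\<gamma> s - \<gamma> t)) \<le> norm (p n (sn n) - \<gamma> s) + norm (p n (tn n) - \<gamma> t)"
        using H(4,5) norm_triangle_ineq4[of "p n (sn n) - \<gamma> s" "p n (tn n) - \<gamma> t"] by (simp add: algebra_simps)
      then show "\<exists>x d. norm (\<gamma> x - \<gamma> t) \<le> \<eta> \<and> norm (d - (\<gamma> s - \<gamma> t)) \<le> \<eta> \<and> \<bar>inner (g' x) d\<bar> \<le> \<eta> * norm d"
        using H by (intro exI[of _ s'] exI[of _ "p n t' - p n s'"]) auto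
    qed
  qed
  have k2: "inner (g' s) (\<gamma> t - \<gamma> s) = 0"
  proof (rule key_limit[OF conts Bd])
    show "\<forall>\<eta>>0. \<exists>x d. norm (\<gamma> x - \<gamma> s) \<le> \<eta> \<and> norm (d - (\<gamma> t - \<gamma> s)) \<le> \<eta> \<and> \<bar>inner (g' x) d\<bar> \<le> \<eta> * norm d"
    proof (intro allI impI)
      fix \<eta> :: real assume \<eta>: "\<eta> > 0"
      from approx[OF \<eta>] obtain n t' s' where H: "norm (p n (sn n) - \<gamma> s) \<le> \<eta>/2" "norm (p n (tn n) - \<gamma> t) \<le> \<eta>/2"
        "norm (\<gamma> t' - \<gamma> s) \<le> \<eta>" "p n t' = p n (sn n)" "p n s' = p n (tn n)"
        "\<bar>inner (g' t') (p n s' - p n t')\<bar> \<le> \<eta> * norm (p n s' - p n t')" by blast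
      have "norm ((p n s' - p n t') - (\<gamma> t - \<gamma> s)) \<le> norm (p n (tn n) - \<gamma> t) + norm (p n (sn n) - \<gamma> s)"
        using H(4,5) norm_triangle_ineq4[of "p n (tn n) - \<gamma> t" "p n (sn n) - \<gamma> s"] by (simp add: algebra_simps)
      then show "\<exists>x d. norm (\<gamma> x - \<gamma> s) \<le> \<eta> \<and> norm (d - (\<gamma> t - \<gamma> s)) \<le> \<eta> \<and> \<bar>inner (g' x) d\<bar> \<le> \<eta> * norm d"
        using H by (intro exI[of _ t'] exI[of _ "p n s' - p n t'"]) auto
    qed
  qed
  have k2': "inner (g' s) (\<gamma> s - \<gamma> t) = 0"
    using k2 by (simp add: inner_diff_right)
  show ?thesis unfolding dcrit_C1_def mem_Collect_eq vd using neq k1 k2' by blast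
qed


end
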